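(* For every integer $n\ge 0$, $|\mathfrak D^1_{2n}(1342,1423)|=s_{n+1}$, where $s_m$ is the $m$th little Schröder number.
   Context: A Dumont permutation of the first kind of length $2n$ is a permutation $\pi\in\mathfrak S_{2n}$ such that for every $i=1,\dots,2n$: if $\pi(i)$ is even then $i<2n$ and $\pi(i)>\pi(i+1)$; if $\pi(i)$ is odd then $i=2n$ or $\pi(i)<\pi(i+1)$. $\mathfrak D^1_{2n}$ denotes the set of these ($\mathfrak D^1_0$ consists of the empty permutation). A permutation $\sigma$ contains a pattern $\tau\in\mathfrak S_k$ if some subsequence $(\sigma(i_1),\dots,\sigma(i_k))$, $i_1<\dots<i_k$, is order-isomorphic to $\tau$; otherwise $\sigma$ avoids $\tau$. $\mathfrak D^1_{2n}(T)$ denotes the set of permutations in $\mathfrak D^1_{2n}$ avoiding every pattern in $T$. The little Schröder numbers $s_1,s_2,\dots$ ($1,1,3,11,45,\dots$) are defined by the generating function $\sum_{m\ge 1}s_mx^m=\frac{1+x-\sqrt{1-6x+x^2}}{4}$. *)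

theory Defs
  imports Main "HOL-Combinatorics.Permutations" "HOL-Computational_Algebra.Formal_Power_Series"
begin

definition dumont1 :: "nat \<Rightarrow> (nat \<Rightarrow> nat) \<Rightarrow> bool" where
  "dumont1 n \<pi> \<longleftrightarrow> \<pi> permutes {1..2*n} \<and>
     (\<forall>i\<in>{1..2*n}.
        (even (\<pi> i) \<longrightarrow> i < 2*n \<and> \<pi> i > \<pi> (i+1)) \<and>
        (odd (\<pi> i) \<longrightarrow> i = 2*n \<or> \<pi> i < \<pi> (i+1)))"

definition contains_pattern :: "nat \<Rightarrow> (nat \<Rightarrow> nat) \<Rightarrow> nat list \<Rightarrow> bool" where
  "contains_pattern m \<sigma> \<tau> \<longleftrightarrow>
     (\<exists>idx :: nat \<Rightarrow> nat.
        (\<forall>j<length \<tau>. idx j \<in> {1..m}) \<and>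
        (\<forall>a b. a < b \<and> b < length \<tau> \<longrightarrow> idx a < idx b) \<and>
        (\<forall>a<length \<tau>. \<forall>b<length \<tau>. (\<sigma> (idx a) < \<sigma> (idx b) \<longleftrightarrow> \<tau> ! a < \<tau> ! b)))"

definition avoids :: "nat \<Rightarrow> (nat \<Rightarrow> nat) \<Rightarrow> nat list \<Rightarrow> bool" where
  "avoids m \<sigma> \<tau> \<longleftrightarrow> \<not> contains_pattern m \<sigma> \<tau>"

definition dumont1_avoiding :: "nat \<Rightarrow> nat list set \<Rightarrow> (nat \<Rightarrow> nat) set" where
  "dumont1_avoiding n T = {\<pi>. dumont1 n \<pi> \<and> (\<forall>\<tau>\<in>T. avoids (2*n) \<pi> \<tau>)}"

text \<open>Little Schroeder numbers: coefficients of (1 + x - sqrt(1 - 6x + x^2))/4,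
  where the square root is the formal power series square root with constant term 1.\<close>
definition little_schroeder_gf :: "real fps" where
  "little_schroeder_gf =
     fps_const (1/4) * (1 + fps_X - fps_radical (\<lambda>k x. root k x) 2 (1 - 6 * fps_X + fps_X ^ 2))"

definition little_schroeder :: "nat \<Rightarrow> real" where
  "little_schroeder m = fps_nth little_schroeder_gf m"

end

theory Submission
  imports Defs
begin

unbundle fps_syntax

lemma ls_eqn:
  "2 * little_schroeder_gf ^ 2 - (1 + fps_X) * little_schroeder_gf + fps_X = 0"
proof -
  define D :: "real fps" where "D = 1 - 6 * fps_X + fps_X ^ 2"
  define R where "R = fps_radical (\<lambda>k x. root k x) 2 D"
  define S where "S = little_schroeder_gf"
  have D0: "D $ 0 = 1" by (simp add: D_def)
  have RD: "R ^ 2 = D"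
    using power_radical[of D "\<lambda>k x. root k x" 1] D0 unfolding R_def
    by (simp add: power2_eq_square numeral_2_eq_2)
  have S: "S = fps_const (1/4) * (1 + fps_X - R)"
    unfolding S_def little_schroeder_gf_def R_def D_def by simp
  have c: "4 * fps_const (1/4::real) = 1"
  proof -
    have "fps_const (4::real) * fps_const (1/4) = fps_const (4 * (1/4))"
      by (simp only: fps_const_mult)
    thus ?thesis by (simp add: numeral_fps_const)
  qed
  have "4 * S = 1 + fps_X - R" unfolding S
    by (metis c mult.assoc mult_1)
  hence R: "R = 1 + fps_X - 4 * S" by (simp add: algebra_simps)
  have "(1 + fps_X - 4 * S) ^ 2 = 1 - 6 * fps_X + fps_X ^ 2"
    using RD unfolding R D_def .
  hence "16 * S^2 - 8 * ((1 + fps_X) * S) + 8 * fps_X = 0"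
    by (simp add: algebra_simps power2_eq_square)
  hence "(8::real fps) * (2 * S ^ 2 - (1 + fps_X) * S + fps_X) = 0"
    by (simp add: algebra_simps power2_eq_square)
  hence "2 * S ^ 2 - (1 + fps_X) * S + fps_X = 0"
    by (metis mult_eq_0_iff numeral_neq_fps_zero)
  thus ?thesis unfolding S_def .
qed

lemma ls0: "little_schroeder_gf $ 0 = 0"
  unfolding little_schroeder_gf_def by simp

lemma ls_coeff: "2 * (little_schroeder_gf ^ 2) $ j - little_schroeder_gf $ j
   - (if j = 0 then 0 else little_schroeder_gf $ (j - 1)) + (if j = 1 then 1 else 0) = 0"
proof -
  have "(2 * little_schroeder_gf ^ 2 - (1 + fps_X) * little_schroeder_gf + fps_X) $ j = 0"
    using ls_eqn by simp
  thus ?thesis by (simp add: algebra_simps numeral_fps_const)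
qed

lemma ls1: "little_schroeder 1 = 1"
proof -
  have "(little_schroeder_gf ^ 2) $ 1 = 0"
    by (simp add: power2_eq_square fps_mult_nth ls0)
  thus ?thesis using ls_coeff[of 1] ls0 unfolding little_schroeder_def by simp
qed

lemma ls_rec: "little_schroeder (j + 2) =
   2 * (\<Sum>i\<le>j. little_schroeder (i + 1) * little_schroeder (j - i + 1)) - little_schroeder (j + 1)"
proof -
  let ?S = little_schroeder_gf
  define f where "f i = ?S $ i * ?S $ (j + 2 - i)" for i
  have "(?S ^ 2) $ (j+2) = (\<Sum>i\<le>Suc (Suc j). f i)"
    by (simp add: power2_eq_square fps_mult_nth f_def atLeast0AtMost)
  also have "\<dots> = f 0 + (\<Sum>i\<le>j. f (Suc i)) + f (Suc (Suc j))"
    by (subst sum.atMost_Suc_shift) (simp only: sum.atMost_Suc add.assoc)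
  also have "\<dots> = (\<Sum>i\<le>j. little_schroeder (i + 1) * little_schroeder (j - i + 1))"
    unfolding f_def little_schroeder_def
    by (auto simp: ls0 Suc_diff_le intro!: sum.cong)
  finally have "(?S ^ 2) $ (j+2) = (\<Sum>i\<le>j. little_schroeder (i + 1) * little_schroeder (j - i + 1))" .
  thus ?thesis using ls_coeff[of "j+2"] unfolding little_schroeder_def by simp
qed



definition c1342 :: "nat \<Rightarrow> (nat \<Rightarrow> nat) \<Rightarrow> bool" where
  "c1342 M p \<longleftrightarrow> (\<exists>a b c d. 1 \<le> a \<and> a < b \<and> b < c \<and> c < d \<and> d \<le> M \<and>
      p a < p d \<and> p d < p b \<and> p b < p c)"

definition c1423 :: "nat \<Rightarrow> (nat \<Rightarrow> nat) \<Rightarrow> bool" where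
  "c1423 M p \<longleftrightarrow> (\<exists>a b c d. 1 \<le> a \<and> a < b \<and> b < c \<and> c < d \<and> d \<le> M \<and>
      p a < p c \<and> p c < p d \<and> p d < p b)"

lemma less4: "(x::nat) < 4 \<longleftrightarrow> x = 0 \<or> x = 1 \<or> x = 2 \<or> x = 3" by auto

lemma cp1342: "contains_pattern M p [1,3,4,2] \<longleftrightarrow> c1342 M p"
proof
  assume "contains_pattern M p [1,3,4,2]"
  hence "\<exists>idx. (\<forall>j<4. idx j \<in> {1..M}) \<and> (\<forall>a b. a < b \<and> b < 4 \<longrightarrow> idx a < idx b) \<and>
    (\<forall>a<4. \<forall>b<4. (p (idx a) < p (idx b) \<longleftrightarrow> [1,3,4,2::nat] ! a < [1,3,4,2] ! b))"
    unfolding contains_pattern_def by (simp add: eval_nat_numeral)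
  then obtain idx where h1: "\<forall>j<4. idx j \<in> {1..M}"
    and h2: "\<forall>a b. a < b \<and> b < 4 \<longrightarrow> idx a < idx b"
    and h3: "\<forall>a<4. \<forall>b<4. (p (idx a) < p (idx b) \<longleftrightarrow> [1,3,4,2::nat] ! a < [1,3,4,2] ! b)"
    unfolding contains_pattern_def by auto
  have "p (idx 0) < p (idx 3)" "p (idx 3) < p (idx 1)" "p (idx 1) < p (idx 2)"
    using h3[rule_format, of 0 3] h3[rule_format, of 3 1] h3[rule_format, of 1 2] by auto
  moreover have "1 \<le> idx 0" "idx 3 \<le> M" using h1 by auto
  moreover have "idx 0 < idx 1" "idx 1 < idx 2" "idx 2 < idx 3" using h2 by auto
  ultimately show "c1342 M p" unfolding c1342_def by blast
next
  assume "c1342 M p"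
  then obtain a b c d where h: "1 \<le> a" "a < b" "b < c" "c < d" "d \<le> M"
      "p a < p d" "p d < p b" "p b < p c" unfolding c1342_def by blast
  define idx where "idx j = (if j = 0 then a else if j = 1 then b else if j = 2 then c else d)" for j :: nat
  have "(\<forall>j<4. idx j \<in> {1..M}) \<and> (\<forall>x y. x < y \<and> y < 4 \<longrightarrow> idx x < idx y) \<and>
     (\<forall>x<4. \<forall>y<4. (p (idx x) < p (idx y) \<longleftrightarrow> [1,3,4,2::nat] ! x < [1,3,4,2] ! y))"
    unfolding less4 idx_def using h by auto
  thus "contains_pattern M p [1,3,4,2]" unfolding contains_pattern_def by (simp add: eval_nat_numeral) blast
qed

lemma cp1423: "contains_pattern M p [1,4,2,3] \<longleftrightarrow> c1423 M p"
proof
  assume "contains_pattern M p [1,4,2,3]"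
  hence "\<exists>idx. (\<forall>j<4. idx j \<in> {1..M}) \<and> (\<forall>a b. a < b \<and> b < 4 \<longrightarrow> idx a < idx b) \<and>
    (\<forall>a<4. \<forall>b<4. (p (idx a) < p (idx b) \<longleftrightarrow> [1,4,2,3::nat] ! a < [1,4,2,3] ! b))"
    unfolding contains_pattern_def by (simp add: eval_nat_numeral)
  then obtain idx where h1: "\<forall>j<4. idx j \<in> {1..M}"
    and h2: "\<forall>a b. a < b \<and> b < 4 \<longrightarrow> idx a < idx b"
    and h3: "\<forall>a<4. \<forall>b<4. (p (idx a) < p (idx b) \<longleftrightarrow> [1,4,2,3::nat] ! a < [1,4,2,3] ! b)"
    unfolding contains_pattern_def by auto
  have "p (idx 0) < p (idx 2)" "p (idx 2) < p (idx 3)" "p (idx 3) < p (idx 1)"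
    using h3[rule_format, of 0 2] h3[rule_format, of 2 3] h3[rule_format, of 3 1] by auto
  moreover have "1 \<le> idx 0" "idx 3 \<le> M" using h1 by auto
  moreover have "idx 0 < idx 1" "idx 1 < idx 2" "idx 2 < idx 3" using h2 by auto
  ultimately show "c1423 M p" unfolding c1423_def by blast
next
  assume "c1423 M p"
  then obtain a b c d where h: "1 \<le> a" "a < b" "b < c" "c < d" "d \<le> M"
      "p a < p c" "p c < p d" "p d < p b" unfolding c1423_def by blast
  define idx where "idx j = (if j = 0 then a else if j = 1 then b else if j = 2 then c else d)" for j :: nat
  have "(\<forall>j<4. idx j \<in> {1..M}) \<and> (\<forall>x y. x < y \<and> y < 4 \<longrightarrow> idx x < idx y) \<and>
     (\<forall>x<4. \<forall>y<4. (p (idx x) < p (idx y) \<longleftrightarrow> [1,4,2,3::nat] ! x < [1,4,2,3] ! y))"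
    unfolding less4 idx_def using h by auto
  thus "contains_pattern M p [1,4,2,3]" unfolding contains_pattern_def by (simp add: eval_nat_numeral) blast
qed

definition Dm :: "nat \<Rightarrow> (nat \<Rightarrow> nat) set" where
  "Dm n = {p. dumont1 n p \<and> \<not> c1342 (2*n) p \<and> \<not> c1423 (2*n) p}"

lemma Dm_eq: "dumont1_avoiding n {[1,3,4,2], [1,4,2,3]} = Dm n"
proof -
  have "(\<forall>\<tau>\<in>{[1,3,4,2], [1,4,2,3]}. avoids (2*n) p \<tau>) \<longleftrightarrow> \<not> c1342 (2*n) p \<and> \<not> c1423 (2*n) p" for p
    by (simp only: ball_simps avoids_def cp1342 cp1423 simp_thms)
  thus ?thesis unfolding dumont1_avoiding_def Dm_def by blast
qed

lemma Dm_finite: "finite (Dm n)"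
proof -
  have "Dm n \<subseteq> {p. p permutes {1..2*n}}" unfolding Dm_def dumont1_def by auto
  thus ?thesis using finite_permutations[of "{1..2*n}"] finite_subset by auto
qed

lemma Dm0: "Dm 0 = {id}"
proof -
  have "dumont1 0 p \<longleftrightarrow> p = id" for p
    unfolding dumont1_def by (auto simp: permutes_empty)
  moreover have "\<not> c1342 0 p" "\<not> c1423 0 p" for p unfolding c1342_def c1423_def by auto
  ultimately show ?thesis unfolding Dm_def by auto
qed

lemma perm_range: "p permutes {1..M} \<Longrightarrow> 1 \<le> i \<Longrightarrow> i \<le> M \<Longrightarrow> 1 \<le> p i \<and> p i \<le> M"
  using permutes_in_image[of p "{1..M}" i] by auto

lemma perm_out: "p permutes {1..M} \<Longrightarrow> \<not> (1 \<le> i \<and> i \<le> M) \<Longrightarrow> p i = i"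
  using permutes_not_in[of p "{1..M}" i] by auto

lemma perm_inj: "p permutes S \<Longrightarrow> p x = p y \<Longrightarrow> x = y"
  using permutes_inj[of p S] by (auto dest: injD)

lemma mk_perm:
  fixes f :: "nat \<Rightarrow> nat"
  assumes "\<And>i. 1 \<le> i \<Longrightarrow> i \<le> L \<Longrightarrow> 1 \<le> f i \<and> f i \<le> L"
    and "\<And>x y. 1 \<le> x \<Longrightarrow> x \<le> L \<Longrightarrow> 1 \<le> y \<Longrightarrow> y \<le> L \<Longrightarrow> f x = f y \<Longrightarrow> x = y"
    and "\<And>i. \<not> (1 \<le> i \<and> i \<le> L) \<Longrightarrow> f i = i"
  shows "f permutes {1..L}"
proof (rule bij_imp_permutes)
  have im: "f ` {1..L} \<subseteq> {1..L}" using assms(1) by auto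
  have inj: "inj_on f {1..L}" using assms(2) by (auto intro: inj_onI)
  show "bij_betw f {1..L} {1..L}"
    using endo_inj_surj[OF _ im inj] inj by (simp add: bij_betw_def)
  show "\<And>x. x \<notin> {1..L} \<Longrightarrow> f x = x" using assms(3) by auto
qed

lemma dum_even: "dumont1 n p \<Longrightarrow> 1 \<le> i \<Longrightarrow> i \<le> 2*n \<Longrightarrow> even (p i) \<Longrightarrow> i < 2*n \<and> p (i+1) < p i"
  unfolding dumont1_def by auto

lemma dum_odd: "dumont1 n p \<Longrightarrow> 1 \<le> i \<Longrightarrow> i \<le> 2*n \<Longrightarrow> odd (p i) \<Longrightarrow> i = 2*n \<or> p i < p (i+1)"
  unfolding dumont1_def by auto

lemma dum_perm: "dumont1 n p \<Longrightarrow> p permutes {1..2*n}"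
  unfolding dumont1_def by auto

lemma c1342_window:
  assumes "1 \<le> a" "a < b" "b < c" "c < d" "p a < p d" "p d < p b" "p b < p c"
    "s < a" "d \<le> s + L" "\<And>i. s < i \<Longrightarrow> i \<le> s + L \<Longrightarrow> p i = q (i - s) + t"
  shows "c1342 L q"
  unfolding c1342_def
  apply (rule exI[of _ "a - s"], rule exI[of _ "b - s"], rule exI[of _ "c - s"], rule exI[of _ "d - s"])
  using assms(1-9) assms(10)[of a] assms(10)[of b] assms(10)[of c] assms(10)[of d] by (auto; linarith)

lemma c1423_window:
  assumes "1 \<le> a" "a < b" "b < c" "c < d" "p a < p c" "p c < p d" "p d < p b"
    "s < a" "d \<le> s + L" "\<And>i. s < i \<Longrightarrow> i \<le> s + L \<Longrightarrow> p i = q (i - s) + t"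
  shows "c1423 L q"
  unfolding c1423_def
  apply (rule exI[of _ "a - s"], rule exI[of _ "b - s"], rule exI[of _ "c - s"], rule exI[of _ "d - s"])
  using assms(1-9) assms(10)[of a] assms(10)[of b] assms(10)[of c] assms(10)[of d] by (auto; linarith)

lemma c1342_lift:
  assumes "c1342 L q" "\<And>i. 1 \<le> i \<Longrightarrow> i \<le> L \<Longrightarrow> p (i + s) = q i + t" "s + L \<le> M"
  shows "c1342 M p"
proof -
  obtain a b c d where h: "1 \<le> a" "a < b" "b < c" "c < d" "d \<le> L"
      "q a < q d" "q d < q b" "q b < q c" using assms(1) unfolding c1342_def by blast
  show ?thesis unfolding c1342_def
    apply (rule exI[of _ "a + s"], rule exI[of _ "b + s"], rule exI[of _ "c + s"], rule exI[of _ "d + s"])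
    using h assms(3) assms(2)[of a] assms(2)[of b] assms(2)[of c] assms(2)[of d] by auto
qed

lemma c1423_lift:
  assumes "c1423 L q" "\<And>i. 1 \<le> i \<Longrightarrow> i \<le> L \<Longrightarrow> p (i + s) = q i + t" "s + L \<le> M"
  shows "c1423 M p"
proof -
  obtain a b c d where h: "1 \<le> a" "a < b" "b < c" "c < d" "d \<le> L"
      "q a < q c" "q c < q d" "q d < q b" using assms(1) unfolding c1423_def by blast
  show ?thesis unfolding c1423_def
    apply (rule exI[of _ "a + s"], rule exI[of _ "b + s"], rule exI[of _ "c + s"], rule exI[of _ "d + s"])
    using h assms(3) assms(2)[of a] assms(2)[of b] assms(2)[of c] assms(2)[of d] by auto
qed

definition glueA :: "nat \<Rightarrow> nat \<Rightarrow> (nat \<Rightarrow> nat) \<Rightarrow> (nat \<Rightarrow> nat) \<Rightarrow> nat \<Rightarrow> nat" where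
  "glueA k m \<sigma> \<tau> i = (if 1 \<le> i \<and> i \<le> 2*k then \<sigma> i + 2*m
     else if i = 2*k+1 then 2*k+2*m+1
     else if i = 2*k+2 then 2*k+2*m+2
     else if 2*k+2 < i \<and> i \<le> 2*k+2*m+2 then \<tau> (i - (2*k+2))
     else i)"

lemma glueA_in:
  assumes \<sigma>: "\<sigma> \<in> Dm k" and \<tau>: "\<tau> \<in> Dm m" and m1: "1 \<le> m"
  shows "glueA k m \<sigma> \<tau> \<in> Dm (k+m+1)"
proof -
  define g where "g = glueA k m \<sigma> \<tau>"
  define N where "N = 2*(k+m+1)"
  have sd: "dumont1 k \<sigma>" and td: "dumont1 m \<tau>" using \<sigma> \<tau> unfolding Dm_def by auto
  have sp: "\<sigma> permutes {1..2*k}" and tp: "\<tau> permutes {1..2*m}" using sd td dum_perm by auto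
  have sr: "1 \<le> \<sigma> i \<and> \<sigma> i \<le> 2*k" if "1 \<le> i" "i \<le> 2*k" for i using perm_range[OF sp that] .
  have tr: "1 \<le> \<tau> i \<and> \<tau> i \<le> 2*m" if "1 \<le> i" "i \<le> 2*m" for i using perm_range[OF tp that] .
  have g1: "g i = \<sigma> i + 2*m" if "1 \<le> i" "i \<le> 2*k" for i using that unfolding g_def glueA_def by auto
  have g2: "g (2*k+1) = N - 1" unfolding g_def glueA_def N_def by auto
  have g3: "g (2*k+2) = N" unfolding g_def glueA_def N_def by auto
  have g4: "g i = \<tau> (i - (2*k+2))" if "2*k+2 < i" "i \<le> N" for i
    using that unfolding g_def glueA_def N_def by auto
  have g5: "g i = i" if "\<not> (1 \<le> i \<and> i \<le> N)" for i
    using that unfolding g_def glueA_def N_def by auto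
  have reg: "(1 \<le> i \<and> i \<le> 2*k \<and> 2*m < g i \<and> g i \<le> N - 2) \<or> (i = 2*k+1 \<and> g i = N - 1)
     \<or> (i = 2*k+2 \<and> g i = N) \<or> (2*k+2 < i \<and> i \<le> N \<and> 1 \<le> g i \<and> g i \<le> 2*m)"
    if "1 \<le> i" "i \<le> N" for i
  proof -
    consider "i \<le> 2*k" | "i = 2*k+1" | "i = 2*k+2" | "2*k+2 < i" by linarith
    thus ?thesis
    proof cases
      case 1 thus ?thesis using g1[of i] sr[of i] that N_def by auto
    next
      case 2 thus ?thesis using g2 by auto
    next
      case 3 thus ?thesis using g3 by auto
    next
      case 4 thus ?thesis using g4[of i] tr[of "i - (2*k+2)"] that N_def by auto
    qed
  qed
  have perm: "g permutes {1..N}"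
  proof (rule mk_perm)
    show "1 \<le> g i \<and> g i \<le> N" if "1 \<le> i" "i \<le> N" for i
      using reg[OF that] N_def by auto
    show "g i = i" if "\<not> (1 \<le> i \<and> i \<le> N)" for i using g5 that by auto
    show "x = y" if "1 \<le> x" "x \<le> N" "1 \<le> y" "y \<le> N" "g x = g y" for x y
    proof -
      have "x \<le> 2*k \<and> y \<le> 2*k \<or> 2*k+2 < x \<and> 2*k+2 < y \<or> x = y"
        using reg[of x] reg[of y] that N_def by auto
      moreover have "x = y" if "x \<le> 2*k" "y \<le> 2*k" "g x = g y" "1 \<le> x" "1 \<le> y"
        using that g1[of x] g1[of y] perm_inj[OF sp, of x y] by auto
      moreover have "x = y" if "2*k+2 < x" "2*k+2 < y" "g x = g y" "x \<le> N" "y \<le> N"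
        using that g4[of x] g4[of y] perm_inj[OF tp, of "x - (2*k+2)" "y - (2*k+2)"] by auto
      ultimately show "x = y" using that by blast
    qed
  qed
  have dum: "dumont1 (k+m+1) g"
    unfolding dumont1_def
  proof (rule conjI)
    show "g permutes {1..2*(k+m+1)}" using perm N_def by simp
  next
   show "\<forall>i\<in>{1..2*(k+m+1)}. (even (g i) \<longrightarrow> i < 2*(k+m+1) \<and> g i > g (i+1)) \<and>
          (odd (g i) \<longrightarrow> i = 2*(k+m+1) \<or> g i < g (i+1))"
   proof
    fix i assume i: "i \<in> {1..2*(k+m+1)}"
    have "(even (g i) \<longrightarrow> i < N \<and> g (i+1) < g i) \<and> (odd (g i) \<longrightarrow> i = N \<or> g i < g (i+1))"
    proof -
      consider "i < 2*k" | "i = 2*k" "k \<ge> 1" | "i = 2*k+1" | "i = 2*k+2" | "2*k+2 < i" "i < N" | "i = N"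
        using i N_def by fastforce
      thus ?thesis
      proof cases
        case 1
        have "1 \<le> i" using i by auto
        thus ?thesis using 1 g1[of i] g1[of "i+1"] dum_even[OF sd, of i] dum_odd[OF sd, of i] N_def by auto
      next
        case 2
        have "odd (\<sigma> i)" using dum_even[OF sd, of i] 2 by auto
        thus ?thesis using 2 g1[of i] g2 sr[of i] N_def by auto
      next
        case 3 thus ?thesis using g2 g3 N_def by auto
      next
        case 4 thus ?thesis using g3 g4[of "i+1"] tr[of 1] m1 N_def by auto
      next
        case 5
        define j where "j = i - (2*k+2)"
        have j: "1 \<le> j" "j < 2*m" "i = j + (2*k+2)" using 5 j_def N_def by auto
        thus ?thesis using g4[of i] g4[of "i+1"] dum_even[OF td, of j] dum_odd[OF td, of j] 5 N_def by auto
      next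
        case 6
        have "odd (\<tau> (2*m))" using dum_even[OF td, of "2*m"] m1 by auto
        thus ?thesis using 6 g4[of N] N_def m1 by auto
      qed
    qed
    thus "(even (g i) \<longrightarrow> i < 2*(k+m+1) \<and> g i > g (i+1)) \<and>
          (odd (g i) \<longrightarrow> i = 2*(k+m+1) \<or> g i < g (i+1))" using N_def by simp
   qed
  qed
  have av1: "\<not> c1342 N g"
  proof
    assume "c1342 N g"
    then obtain a b c d where h: "1 \<le> a" "a < b" "b < c" "c < d" "d \<le> N"
      "g a < g d" "g d < g b" "g b < g c" unfolding c1342_def by blast
    have nd: "\<not> d \<le> 2*k"
    proof
      assume "d \<le> 2*k"
      hence "c1342 (2*k) \<sigma>" using c1342_window[OF h(1-4) h(6-8), of 0 "2*k" \<sigma> "2*m"] h g1 by auto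
      thus False using \<sigma> unfolding Dm_def by auto
    qed
    have na: "\<not> 2*k+2 < a"
    proof
      assume a: "2*k+2 < a"
      have "c1342 (2*m) \<tau>" using c1342_window[OF h(1-4) h(6-8), of "2*k+2" "2*m" \<tau> 0] h a g4 N_def by auto
      thus False using \<tau> unfolding Dm_def by auto
    qed
    show False using reg[of a] reg[of b] reg[of c] reg[of d] h nd na N_def by auto
  qed
  have av2: "\<not> c1423 N g"
  proof
    assume "c1423 N g"
    then obtain a b c d where h: "1 \<le> a" "a < b" "b < c" "c < d" "d \<le> N"
      "g a < g c" "g c < g d" "g d < g b" unfolding c1423_def by blast
    have nd: "\<not> d \<le> 2*k"
    proof
      assume "d \<le> 2*k"
      hence "c1423 (2*k) \<sigma>" using c1423_window[OF h(1-4) h(6-8), of 0 "2*k" \<sigma> "2*m"] h g1 by auto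
      thus False using \<sigma> unfolding Dm_def by auto
    qed
    have na: "\<not> 2*k+2 < a"
    proof
      assume a: "2*k+2 < a"
      have "c1423 (2*m) \<tau>" using c1423_window[OF h(1-4) h(6-8), of "2*k+2" "2*m" \<tau> 0] h a g4 N_def by auto
      thus False using \<tau> unfolding Dm_def by auto
    qed
    show False using reg[of a] reg[of b] reg[of c] reg[of d] h nd na N_def by auto
  qed
  show ?thesis using dum av1 av2 unfolding Dm_def g_def N_def by auto
qed

definition glueB :: "nat \<Rightarrow> nat \<Rightarrow> (nat \<Rightarrow> nat) \<Rightarrow> (nat \<Rightarrow> nat) \<Rightarrow> nat \<Rightarrow> nat" where
  "glueB k m \<sigma> \<tau> i = (if 1 \<le> i \<and> i \<le> 2*k then \<sigma> i + 2*m
     else if i = 2*k+1 then 2*k+2*m+2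
     else if 2*k+1 < i \<and> i \<le> 2*k+2*m+1 then \<tau> (i - (2*k+1))
     else if i = 2*k+2*m+2 then 2*k+2*m+1
     else i)"

lemma glueB_in:
  assumes \<sigma>: "\<sigma> \<in> Dm k" and \<tau>: "\<tau> \<in> Dm m"
  shows "glueB k m \<sigma> \<tau> \<in> Dm (k+m+1)"
proof -
  define g where "g = glueB k m \<sigma> \<tau>"
  define N where "N = 2*(k+m+1)"
  have sd: "dumont1 k \<sigma>" and td: "dumont1 m \<tau>" using \<sigma> \<tau> unfolding Dm_def by auto
  have sp: "\<sigma> permutes {1..2*k}" and tp: "\<tau> permutes {1..2*m}" using sd td dum_perm by auto
  have sr: "1 \<le> \<sigma> i \<and> \<sigma> i \<le> 2*k" if "1 \<le> i" "i \<le> 2*k" for i using perm_range[OF sp that] .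
  have tr: "1 \<le> \<tau> i \<and> \<tau> i \<le> 2*m" if "1 \<le> i" "i \<le> 2*m" for i using perm_range[OF tp that] .
  have g1: "g i = \<sigma> i + 2*m" if "1 \<le> i" "i \<le> 2*k" for i using that unfolding g_def glueB_def by auto
  have g2: "g (2*k+1) = N" unfolding g_def glueB_def N_def by auto
  have g3: "g N = N - 1" unfolding g_def glueB_def N_def by auto
  have g4: "g i = \<tau> (i - (2*k+1))" if "2*k+1 < i" "i < N" for i
    using that unfolding g_def glueB_def N_def by auto
  have g5: "g i = i" if "\<not> (1 \<le> i \<and> i \<le> N)" for i
    using that unfolding g_def glueB_def N_def by auto
  have reg: "(1 \<le> i \<and> i \<le> 2*k \<and> 2*m < g i \<and> g i \<le> N - 2) \<or> (i = 2*k+1 \<and> g i = N)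
     \<or> (i = N \<and> g i = N - 1) \<or> (2*k+1 < i \<and> i < N \<and> 1 \<le> g i \<and> g i \<le> 2*m)"
    if "1 \<le> i" "i \<le> N" for i
  proof -
    note iN = that(2)
    consider "i \<le> 2*k" | "i = 2*k+1" | "i = N" | "2*k+1 < i" "i < N" using iN by linarith
    thus ?thesis
    proof cases
      case 1 thus ?thesis using g1[of i] sr[of i] that N_def by auto
    next
      case 2 thus ?thesis using g2 by auto
    next
      case 3 thus ?thesis using g3 by auto
    next
      case 4 thus ?thesis using g4[of i] tr[of "i - (2*k+1)"] that N_def by auto
    qed
  qed
  have perm: "g permutes {1..N}"
  proof (rule mk_perm)
    show "1 \<le> g i \<and> g i \<le> N" if "1 \<le> i" "i \<le> N" for i
      using reg[OF that] N_def by auto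
    show "g i = i" if "\<not> (1 \<le> i \<and> i \<le> N)" for i using g5 that by auto
    show "x = y" if "1 \<le> x" "x \<le> N" "1 \<le> y" "y \<le> N" "g x = g y" for x y
    proof -
      have "x \<le> 2*k \<and> y \<le> 2*k \<or> 2*k+1 < x \<and> 2*k+1 < y \<and> x < N \<and> y < N \<or> x = y"
        using reg[of x] reg[of y] that N_def by auto
      moreover have "x = y" if "x \<le> 2*k" "y \<le> 2*k" "g x = g y" "1 \<le> x" "1 \<le> y"
        using that g1[of x] g1[of y] perm_inj[OF sp, of x y] by auto
      moreover have "x = y" if "2*k+1 < x" "2*k+1 < y" "g x = g y" "x < N" "y < N"
        using that g4[of x] g4[of y] perm_inj[OF tp, of "x - (2*k+1)" "y - (2*k+1)"] by auto
      ultimately show "x = y" using that by blast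
    qed
  qed
  have dum: "dumont1 (k+m+1) g"
    unfolding dumont1_def
  proof (rule conjI)
    show "g permutes {1..2*(k+m+1)}" using perm N_def by simp
  next
   show "\<forall>i\<in>{1..2*(k+m+1)}. (even (g i) \<longrightarrow> i < 2*(k+m+1) \<and> g i > g (i+1)) \<and>
          (odd (g i) \<longrightarrow> i = 2*(k+m+1) \<or> g i < g (i+1))"
   proof
    fix i assume i: "i \<in> {1..2*(k+m+1)}"
    have "(even (g i) \<longrightarrow> i < N \<and> g (i+1) < g i) \<and> (odd (g i) \<longrightarrow> i = N \<or> g i < g (i+1))"
    proof -
      consider "i < 2*k" | "i = 2*k" "k \<ge> 1" | "i = 2*k+1" "m = 0" | "i = 2*k+1" "m \<ge> 1"
        | "2*k+1 < i" "i < N - 1" | "i = N - 1" "m \<ge> 1" | "i = N"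
        using i N_def by fastforce
      thus ?thesis
      proof cases
        case 1
        have "1 \<le> i" using i by auto
        thus ?thesis using 1 g1[of i] g1[of "i+1"] dum_even[OF sd, of i] dum_odd[OF sd, of i] N_def by auto
      next
        case 2
        have "odd (\<sigma> i)" using dum_even[OF sd, of i] 2 by auto
        thus ?thesis using 2 g1[of i] g2 sr[of i] N_def by auto
      next
        case 3 thus ?thesis using g2 g3 N_def by auto
      next
        case 4 thus ?thesis using g2 g4[of "i+1"] tr[of 1] N_def by auto
      next
        case 5
        define j where "j = i - (2*k+1)"
        have j: "1 \<le> j" "j < 2*m" "i = j + (2*k+1)" using 5 j_def N_def by auto
        thus ?thesis using g4[of i] g4[of "i+1"] dum_even[OF td, of j] dum_odd[OF td, of j] 5 N_def by auto
      next
        case 6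
        have "odd (\<tau> (2*m))" using dum_even[OF td, of "2*m"] 6 by auto
        thus ?thesis using 6 g4[of "N - 1"] g3 tr[of "2*m"] N_def by auto
      next
        case 7 thus ?thesis using g3 N_def by auto
      qed
    qed
    thus "(even (g i) \<longrightarrow> i < 2*(k+m+1) \<and> g i > g (i+1)) \<and>
          (odd (g i) \<longrightarrow> i = 2*(k+m+1) \<or> g i < g (i+1))" using N_def by simp
   qed
  qed
  have av1: "\<not> c1342 N g"
  proof
    assume "c1342 N g"
    then obtain a b c d where h: "1 \<le> a" "a < b" "b < c" "c < d" "d \<le> N"
      "g a < g d" "g d < g b" "g b < g c" unfolding c1342_def by blast
    have nd: "\<not> d \<le> 2*k"
    proof
      assume "d \<le> 2*k"
      hence "c1342 (2*k) \<sigma>" using c1342_window[OF h(1-4) h(6-8), of 0 "2*k" \<sigma> "2*m"] h g1 by auto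
      thus False using \<sigma> unfolding Dm_def by auto
    qed
    have na: "\<not> (2*k+1 < a \<and> d < N)"
    proof
      assume a: "2*k+1 < a \<and> d < N"
      have "c1342 (2*m) \<tau>" using c1342_window[OF h(1-4) h(6-8), of "2*k+1" "2*m" \<tau> 0] h a g4 N_def by auto
      thus False using \<tau> unfolding Dm_def by auto
    qed
    show False using reg[of a] reg[of b] reg[of c] reg[of d] h nd na N_def by auto
  qed
  have av2: "\<not> c1423 N g"
  proof
    assume "c1423 N g"
    then obtain a b c d where h: "1 \<le> a" "a < b" "b < c" "c < d" "d \<le> N"
      "g a < g c" "g c < g d" "g d < g b" unfolding c1423_def by blast
    have nd: "\<not> d \<le> 2*k"
    proof
      assume "d \<le> 2*k"
      hence "c1423 (2*k) \<sigma>" using c1423_window[OF h(1-4) h(6-8), of 0 "2*k" \<sigma> "2*m"] h g1 by auto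
      thus False using \<sigma> unfolding Dm_def by auto
    qed
    have na: "\<not> (2*k+1 < a \<and> d < N)"
    proof
      assume a: "2*k+1 < a \<and> d < N"
      have "c1423 (2*m) \<tau>" using c1423_window[OF h(1-4) h(6-8), of "2*k+1" "2*m" \<tau> 0] h a g4 N_def by auto
      thus False using \<tau> unfolding Dm_def by auto
    qed
    show False using reg[of a] reg[of b] reg[of c] reg[of d] h nd na N_def by auto
  qed
  show ?thesis using dum av1 av2 unfolding Dm_def g_def N_def by auto
qed

lemma split_vals:
  fixes \<pi> :: "nat \<Rightarrow> nat"
  assumes perm: "\<pi> permutes {1..N}" and pq: "p \<in> {1..N}" "q \<in> {1..N}" "p \<noteq> q"
    and vp: "\<pi> p = N" and vq: "\<pi> q = N - 1"
    and cover: "\<And>i. 1 \<le> i \<Longrightarrow> i \<le> N \<Longrightarrow> i \<in> A \<or> i \<in> B \<or> i = p \<or> i = q"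
    and AB: "A \<subseteq> {1..N}" "B \<subseteq> {1..N}" "p \<notin> A" "p \<notin> B" "q \<notin> A" "q \<notin> B"
    and sep: "\<And>x y. x \<in> A \<Longrightarrow> y \<in> B \<Longrightarrow> \<pi> y < \<pi> x"
  shows "\<And>y. y \<in> B \<Longrightarrow> 1 \<le> \<pi> y \<and> \<pi> y \<le> card B"
    and "\<And>x. x \<in> A \<Longrightarrow> card B < \<pi> x \<and> \<pi> x \<le> N - 2"
proof -
  have finB: "finite B" using AB(2) finite_subset by blast
  have inj: "inj \<pi>" using perm permutes_inj by blast
  have lt: "1 \<le> \<pi> z \<and> \<pi> z \<le> N - 2" if "z \<in> {1..N}" "z \<noteq> p" "z \<noteq> q" for z
  proof -
    have "\<pi> z \<noteq> N" "\<pi> z \<noteq> N - 1" using that vp vq inj by (metis injD)+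
    thus ?thesis using perm_range[OF perm, of z] that by auto
  qed
  have surj: "\<exists>z. 1 \<le> z \<and> z \<le> N \<and> \<pi> z = v" if "1 \<le> v" "v \<le> N" for v
  proof -
    have "v \<in> \<pi> ` {1..N}" using permutes_image[OF perm] that by auto
    thus ?thesis by auto
  qed
  show "1 \<le> \<pi> y \<and> \<pi> y \<le> card B" if y: "y \<in> B" for y
  proof (rule ccontr)
    have yN: "y \<in> {1..N}" using y AB by auto
    have l: "1 \<le> \<pi> y \<and> \<pi> y \<le> N - 2" using lt[OF yN] y AB by auto
    assume "\<not> (1 \<le> \<pi> y \<and> \<pi> y \<le> card B)"
    hence big: "card B < \<pi> y" using l by auto
    have "{1..\<pi> y} \<subseteq> \<pi> ` B"
    proof
      fix v assume v: "v \<in> {1..\<pi> y}"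
      hence "1 \<le> v" "v \<le> N" using l by auto
      then obtain z where z: "1 \<le> z" "z \<le> N" "\<pi> z = v" using surj[of v] by blast
      have "z \<notin> A" using sep[of z y] y v z by auto
      moreover have "z \<noteq> p" "z \<noteq> q" using z v vp vq l by auto
      ultimately have "z \<in> B" using cover z by blast
      thus "v \<in> \<pi> ` B" using z by auto
    qed
    hence "card {1..\<pi> y} \<le> card (\<pi> ` B)" using finB by (intro card_mono) auto
    also have "\<dots> \<le> card B" using finB card_image_le by blast
    finally show False using big by simp
  qed
  show "card B < \<pi> x \<and> \<pi> x \<le> N - 2" if x: "x \<in> A" for x
  proof (rule ccontr)
    have xN: "x \<in> {1..N}" using x AB by auto
    have l: "1 \<le> \<pi> x \<and> \<pi> x \<le> N - 2" using lt[OF xN] x AB by auto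
    assume "\<not> (card B < \<pi> x \<and> \<pi> x \<le> N - 2)"
    hence small: "\<pi> x \<le> card B" using l by auto
    have "\<pi> ` B \<subseteq> {1..<\<pi> x}"
    proof
      fix v assume "v \<in> \<pi> ` B"
      then obtain y where y: "y \<in> B" "v = \<pi> y" by auto
      have "1 \<le> \<pi> y" using perm_range[OF perm, of y] y AB by auto
      thus "v \<in> {1..<\<pi> x}" using sep[OF x y(1)] y by auto
    qed
    hence "card (\<pi> ` B) \<le> card {1..<\<pi> x}" by (intro card_mono) auto
    moreover have "card (\<pi> ` B) = card B" using inj by (simp add: card_image inj_on_subset)
    ultimately show False using small l by auto
  qed
qed

lemma split_even:
  fixes \<pi> :: "nat \<Rightarrow> nat"
  assumes d: "dumont1 n \<pi>" and N: "N = 2*n"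
    and pq: "p \<in> {1..N}" "q \<in> {1..N}" "\<pi> p = N" "\<pi> q = N - 1"
    and s: "s = p \<or> s = q" and sN: "s \<le> N"
    and cover: "\<And>i. 1 \<le> i \<Longrightarrow> i \<le> N \<Longrightarrow> i < s \<or> i \<in> B \<or> i = p \<or> i = q"
    and valsB: "\<And>y. y \<in> B \<Longrightarrow> \<pi> y \<le> card B"
    and valsA: "\<And>x. 1 \<le> x \<Longrightarrow> x < s \<Longrightarrow> card B < \<pi> x"
    and card: "s - 1 + card B + 2 = N"
  shows "even (card B)"
proof (rule ccontr)
  assume o: "odd (card B)"
  define L where "L = card B"
  have "odd (s - 1)" using card o N L_def by presburger
  hence "0 < s - 1" by (rule odd_pos)
  hence s2: "2 \<le> s" by simp
  have LN: "L + 1 \<le> N - 2" using card s2 o N L_def by presburger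
  have perm: "\<pi> permutes {1..N}" using d N dum_perm by simp
  have "L + 1 \<in> \<pi> ` {1..N}" using permutes_image[OF perm] LN by auto
  then obtain z where z: "1 \<le> z" "z \<le> N" "\<pi> z = L + 1" by auto
  have "z \<notin> B" using valsB[of z] z L_def by auto
  moreover have "z \<noteq> p" "z \<noteq> q" using z pq LN by auto
  ultimately have zs: "z < s" using cover z by blast
  have "even (\<pi> z)" using z o L_def by simp
  hence "\<pi> (z+1) < \<pi> z" using dum_even[OF d, of z] z N by auto
  moreover have "L < \<pi> (z+1) \<or> z + 1 = s"
    using valsA[of "z+1"] zs L_def z by (cases "z + 1 < s") auto
  ultimately show False using z s pq LN by auto
qed

lemma block:
  fixes \<pi> :: "nat \<Rightarrow> nat"
  assumes pi: "\<pi> \<in> Dm n"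
    and bnd: "\<And>i. s < i \<Longrightarrow> i \<le> s + 2*l \<Longrightarrow> t < \<pi> i \<and> \<pi> i \<le> t + 2*l"
    and sl: "s + 2*l \<le> 2*n" and te: "even t"
    and endc: "1 \<le> l \<Longrightarrow> s + 2*l = 2*n \<or> \<pi> (s+2*l) < \<pi> (s+2*l+1)"
  shows "(\<lambda>j. if 1 \<le> j \<and> j \<le> 2*l then \<pi> (j+s) - t else j) \<in> Dm l"
proof -
  define \<sigma> where "\<sigma> = (\<lambda>j. if 1 \<le> j \<and> j \<le> 2*l then \<pi> (j+s) - t else j)"
  have d: "dumont1 n \<pi>" and a1: "\<not> c1342 (2*n) \<pi>" and a2: "\<not> c1423 (2*n) \<pi>"
    using pi unfolding Dm_def by auto
  have perm: "\<pi> permutes {1..2*n}" using d dum_perm by auto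
  have sv: "\<pi> (j+s) = \<sigma> j + t" if "1 \<le> j" "j \<le> 2*l" for j
    using that bnd[of "j+s"] unfolding \<sigma>_def by auto
  have sr: "1 \<le> \<sigma> j \<and> \<sigma> j \<le> 2*l" if "1 \<le> j" "j \<le> 2*l" for j
    using that bnd[of "j+s"] unfolding \<sigma>_def by auto
  have sperm: "\<sigma> permutes {1..2*l}"
  proof (rule mk_perm)
    show "1 \<le> \<sigma> i \<and> \<sigma> i \<le> 2*l" if "1 \<le> i" "i \<le> 2*l" for i using sr that .
    show "\<sigma> i = i" if "\<not> (1 \<le> i \<and> i \<le> 2*l)" for i using that unfolding \<sigma>_def by auto
    show "x = y" if "1 \<le> x" "x \<le> 2*l" "1 \<le> y" "y \<le> 2*l" "\<sigma> x = \<sigma> y" for x y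
      using that sv[of x] sv[of y] perm_inj[OF perm, of "x+s" "y+s"] by auto
  qed
  have sd: "dumont1 l \<sigma>"
    unfolding dumont1_def
  proof (rule conjI)
    show "\<sigma> permutes {1..2*l}" by (rule sperm)
  next
    show "\<forall>j\<in>{1..2*l}. (even (\<sigma> j) \<longrightarrow> j < 2*l \<and> \<sigma> j > \<sigma> (j+1)) \<and>
          (odd (\<sigma> j) \<longrightarrow> j = 2*l \<or> \<sigma> j < \<sigma> (j+1))"
    proof
      fix j assume j: "j \<in> {1..2*l}"
      have j1: "1 \<le> j" "j \<le> 2*l" using j by auto
      have par: "even (\<sigma> j) \<longleftrightarrow> even (\<pi> (j+s))" using sv[OF j1] te by simp
      have i1: "1 \<le> j + s" "j + s \<le> 2*n" using j1 sl by auto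
      show "(even (\<sigma> j) \<longrightarrow> j < 2*l \<and> \<sigma> j > \<sigma> (j+1)) \<and>
          (odd (\<sigma> j) \<longrightarrow> j = 2*l \<or> \<sigma> j < \<sigma> (j+1))"
      proof (intro conjI impI)
        assume e: "even (\<sigma> j)"
        hence h: "j + s < 2*n \<and> \<pi> (j+s+1) < \<pi> (j+s)" using dum_even[OF d i1] par by auto
        have "j \<noteq> 2*l"
        proof
          assume "j = 2*l"
          thus False using endc h j1 by (auto simp: add.commute)
        qed
        hence jl: "j < 2*l" using j1 by auto
        thus "j < 2*l" .
        show "\<sigma> j > \<sigma> (j+1)" using h sv[OF j1] sv[of "j+1"] jl j1 by (auto simp: add.commute add.left_commute)
      next
        assume o: "odd (\<sigma> j)"
        hence h: "j + s = 2*n \<or> \<pi> (j+s) < \<pi> (j+s+1)" using dum_odd[OF d i1] par by auto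
        show "j = 2*l \<or> \<sigma> j < \<sigma> (j+1)"
        proof (cases "j = 2*l")
          case False
          hence jl: "j < 2*l" using j1 by auto
          hence "\<pi> (j+s) < \<pi> (j+s+1)" using h sl by auto
          thus ?thesis using sv[OF j1] sv[of "j+1"] jl j1 by (auto simp: add.commute add.left_commute)
        qed simp
      qed
    qed
  qed
  have n1: "\<not> c1342 (2*l) \<sigma>"
    using c1342_lift[of "2*l" \<sigma> \<pi> s t "2*n"] sv sl a1 by auto
  have n2: "\<not> c1423 (2*l) \<sigma>"
    using c1423_lift[of "2*l" \<sigma> \<pi> s t "2*n"] sv sl a2 by auto
  show ?thesis using sd n1 n2 unfolding Dm_def \<sigma>_def[symmetric] by auto
qed

lemma pos_in:
  fixes \<pi> :: "nat \<Rightarrow> nat"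
  assumes "\<pi> permutes {1..N}" "\<pi> p = N" "1 \<le> N"
  shows "1 \<le> p \<and> p \<le> N"
proof (rule ccontr)
  assume "\<not> (1 \<le> p \<and> p \<le> N)"
  hence "\<pi> p = p" using perm_out[OF assms(1)] by blast
  thus False using assms \<open>\<not> (1 \<le> p \<and> p \<le> N)\<close> by auto
qed




lemma decompA:
  assumes pi: "\<pi> \<in> Dm (n+1)" and vp: "\<pi> p = 2*n+2" and vq: "\<pi> (p-1) = 2*n+1" and p2: "2 \<le> p"
  shows "\<exists>k m \<sigma> \<tau>. k + m = n \<and> 1 \<le> m \<and> \<sigma> \<in> Dm k \<and> \<tau> \<in> Dm m \<and> \<pi> = glueA k m \<sigma> \<tau>"
proof -
  define N where "N = 2*n+2"
  define q where "q = p - 1"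
  have d: "dumont1 (n+1) \<pi>" and a1: "\<not> c1342 N \<pi>" and a2: "\<not> c1423 N \<pi>"
    using pi unfolding Dm_def N_def by auto
  have perm: "\<pi> permutes {1..N}" using dum_perm[OF d] N_def by (simp add: algebra_simps)
  have pN: "1 \<le> p \<and> p \<le> N" using pos_in[OF perm] vp N_def by auto
  have pl: "p < N" using dum_even[of "n+1" \<pi> p] d pN vp N_def by auto
  have vq': "\<pi> q = N - 1" using vq q_def N_def by auto
  have vp': "\<pi> p = N" using vp N_def by auto
  have sep: "\<pi> y < \<pi> x" if x: "x \<in> {1..<q}" and y: "y \<in> {p<..N}" for x y
  proof (rule ccontr)
    assume "\<not> \<pi> y < \<pi> x"
    moreover have "\<pi> y \<noteq> \<pi> x" using perm_inj[OF perm, of y x] x y q_def by auto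
    ultimately have xy: "\<pi> x < \<pi> y" by auto
    have "\<pi> y \<le> N" using perm_range[OF perm, of y] y by auto
    moreover have "y \<noteq> p" "y \<noteq> q" using y q_def p2 by auto
    hence "\<pi> y \<noteq> \<pi> p" "\<pi> y \<noteq> \<pi> q" using perm_inj[OF perm] by metis+
    hence "\<pi> y \<noteq> N" "\<pi> y \<noteq> N - 1" using vp' vq' by auto
    ultimately have "\<pi> y < N - 1" by auto
    hence "c1342 N \<pi>" unfolding c1342_def
      using x y xy vp' vq' q_def p2 by (intro exI[of _ x] exI[of _ q] exI[of _ p] exI[of _ y]) auto
    thus False using a1 by simp
  qed
  have cB: "card {p<..N} = N - p" by simp
  have sv: "\<And>y. y \<in> {p<..N} \<Longrightarrow> 1 \<le> \<pi> y \<and> \<pi> y \<le> card {p<..N}"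
     "\<And>x. x \<in> {1..<q} \<Longrightarrow> card {p<..N} < \<pi> x \<and> \<pi> x \<le> N - 2"
  proof -
    have pin: "p \<in> {1..N}" "q \<in> {1..N}" "p \<noteq> q" using pN q_def p2 by auto
    have cov: "i \<in> {1..<q} \<or> i \<in> {p<..N} \<or> i = p \<or> i = q" if "1 \<le> i" "i \<le> N" for i
      using that q_def p2 by auto
    have sub: "{1..<q} \<subseteq> {1..N}" "{p<..N} \<subseteq> {1..N}" "p \<notin> {1..<q}" "p \<notin> {p<..N}"
        "q \<notin> {1..<q}" "q \<notin> {p<..N}" using q_def p2 pN by auto
    note r = split_vals[OF perm pin vp' vq' cov sub sep]
    show "\<And>y. y \<in> {p<..N} \<Longrightarrow> 1 \<le> \<pi> y \<and> \<pi> y \<le> card {p<..N}" by (rule r(1))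
    show "\<And>x. x \<in> {1..<q} \<Longrightarrow> card {p<..N} < \<pi> x \<and> \<pi> x \<le> N - 2" by (rule r(2))
  qed
  have ev: "even (card {p<..N})"
  proof (rule split_even[OF d _ _ _ vp' vq', of q "{p<..N}"])
    show "N = 2 * (n+1)" using N_def by simp
    show "p \<in> {1..N}" "q \<in> {1..N}" using pN q_def p2 by auto
    show "q = p \<or> q = q" by simp
    show "q \<le> N" using q_def pN by auto
    show "i < q \<or> i \<in> {p<..N} \<or> i = p \<or> i = q" if "1 \<le> i" "i \<le> N" for i
      using that q_def p2 by auto
    show "\<pi> y \<le> card {p<..N}" if "y \<in> {p<..N}" for y using sv(1)[OF that] by simp
    show "card {p<..N} < \<pi> x" if "1 \<le> x" "x < q" for x using sv(2)[of x] that by simp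
    show "q - 1 + card {p<..N} + 2 = N" using cB q_def p2 pl by simp
  qed
  obtain m where m: "N - p = 2*m" using ev cB by (metis evenE)
  have "p = 2*(n-m) + 2" using m N_def p2 pl by arith
  then obtain k where k: "p = 2*k + 2" by blast
  have km: "k + m = n" using k m N_def pl by auto
  have m1: "1 \<le> m" using m pl by auto
  define \<sigma> where "\<sigma> = (\<lambda>j. if 1 \<le> j \<and> j \<le> 2*k then \<pi> (j+0) - 2*m else j)"
  define \<tau> where "\<tau> = (\<lambda>j. if 1 \<le> j \<and> j \<le> 2*m then \<pi> (j+p) - 0 else j)"
  have sD: "\<sigma> \<in> Dm k" unfolding \<sigma>_def
  proof (rule block[OF pi])
    show "2*m < \<pi> i \<and> \<pi> i \<le> 2*m + 2*k" if "0 < i" "i \<le> 0 + 2*k" for i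
      using sv(2)[of i] that k q_def cB m N_def by auto
    show "0 + 2*k \<le> 2*(n+1)" using km by auto
    show "even (2*m)" by simp
    show "0 + 2*k = 2*(n+1) \<or> \<pi> (0+2*k) < \<pi> (0+2*k+1)" if "1 \<le> k"
      using sv(2)[of "2*k"] that k q_def vq' by auto
  qed
  have tD: "\<tau> \<in> Dm m" unfolding \<tau>_def
  proof (rule block[OF pi])
    show "0 < \<pi> i \<and> \<pi> i \<le> 0 + 2*m" if "p < i" "i \<le> p + 2*m" for i
    proof -
      have "i \<le> N" using that m pl by linarith
      thus ?thesis using sv(1)[of i] that cB m by auto
    qed
    show "p + 2*m \<le> 2*(n+1)" using m N_def pl by auto
    show "even (0::nat)" by simp
    show "p + 2*m = 2*(n+1) \<or> \<pi> (p+2*m) < \<pi> (p+2*m+1)" using m N_def pl by auto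
  qed
  have eq: "\<pi> = glueA k m \<sigma> \<tau>"
  proof
    fix i
    consider "1 \<le> i" "i \<le> 2*k" | "i = 2*k+1" | "i = 2*k+2" | "2*k+2 < i" "i \<le> N" | "\<not> (1 \<le> i \<and> i \<le> N)"
      by linarith
    thus "\<pi> i = glueA k m \<sigma> \<tau> i"
    proof cases
      case 1 thus ?thesis using sv(2)[of i] k q_def cB m unfolding glueA_def \<sigma>_def by auto
    next
      case 2 thus ?thesis using vq' k q_def N_def km unfolding glueA_def by auto
    next
      case 3 thus ?thesis using vp' k N_def km unfolding glueA_def by auto
    next
      case 4
      have g: "glueA k m \<sigma> \<tau> i = \<tau> (i - (2*k+2))" using 4 N_def km unfolding glueA_def by auto
      have r: "1 \<le> i - (2*k+2) \<and> i - (2*k+2) \<le> 2*m" using 4 N_def km by auto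
      have e: "i - (2*k+2) + p = i" using 4 k by auto
      have "\<tau> (i - (2*k+2)) = \<pi> (i - (2*k+2) + p)" using r unfolding \<tau>_def by simp
      thus ?thesis using g e by simp
    next
      case 5 thus ?thesis using perm_out[OF perm 5] N_def km unfolding glueA_def by auto
    qed
  qed
  show ?thesis using km m1 sD tD eq by blast
qed

lemma decompB:
  assumes pi: "\<pi> \<in> Dm (n+1)" and vp: "\<pi> p = 2*n+2" and vq: "\<pi> (2*n+2) = 2*n+1"
  shows "\<exists>k m \<sigma> \<tau>. k + m = n \<and> \<sigma> \<in> Dm k \<and> \<tau> \<in> Dm m \<and> \<pi> = glueB k m \<sigma> \<tau>"
proof -
  define N where "N = 2*n+2"
  define q where "q = N"
  have d: "dumont1 (n+1) \<pi>" and a1: "\<not> c1342 N \<pi>" and a2: "\<not> c1423 N \<pi>"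
    using pi unfolding Dm_def N_def by auto
  have perm: "\<pi> permutes {1..N}" using dum_perm[OF d] N_def by (simp add: algebra_simps)
  have pN: "1 \<le> p \<and> p \<le> N" using pos_in[OF perm] vp N_def by auto
  have pl: "p < N" using dum_even[of "n+1" \<pi> p] d pN vp N_def by auto
  have vq': "\<pi> q = N - 1" using vq q_def N_def by auto
  have vp': "\<pi> p = N" using vp N_def by auto
  have sep: "\<pi> y < \<pi> x" if x: "x \<in> {1..<p}" and y: "y \<in> {p<..<N}" for x y
  proof (rule ccontr)
    assume "\<not> \<pi> y < \<pi> x"
    moreover have "\<pi> y \<noteq> \<pi> x" using perm_inj[OF perm, of y x] x y by auto
    ultimately have xy: "\<pi> x < \<pi> y" by auto
    have "\<pi> y \<le> N" using perm_range[OF perm, of y] y by auto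
    moreover have "y \<noteq> p" "y \<noteq> q" using y q_def by auto
    hence "\<pi> y \<noteq> \<pi> p" "\<pi> y \<noteq> \<pi> q" using perm_inj[OF perm] by metis+
    hence "\<pi> y \<noteq> N" "\<pi> y \<noteq> N - 1" using vp' vq' by auto
    ultimately have "\<pi> y < N - 1" by auto
    hence "c1423 N \<pi>" unfolding c1423_def
      using x y xy vp' vq' q_def by (intro exI[of _ x] exI[of _ p] exI[of _ y] exI[of _ N]) auto
    thus False using a2 by simp
  qed
  have cB: "card {p<..<N} = N - 1 - p" by simp
  have sv: "\<And>y. y \<in> {p<..<N} \<Longrightarrow> 1 \<le> \<pi> y \<and> \<pi> y \<le> card {p<..<N}"
     "\<And>x. x \<in> {1..<p} \<Longrightarrow> card {p<..<N} < \<pi> x \<and> \<pi> x \<le> N - 2"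
  proof -
    have pin: "p \<in> {1..N}" "q \<in> {1..N}" "p \<noteq> q" using pN pl q_def N_def by auto
    have cov: "i \<in> {1..<p} \<or> i \<in> {p<..<N} \<or> i = p \<or> i = q" if "1 \<le> i" "i \<le> N" for i
      using that q_def by auto
    have sub: "{1..<p} \<subseteq> {1..N}" "{p<..<N} \<subseteq> {1..N}" "p \<notin> {1..<p}" "p \<notin> {p<..<N}"
        "q \<notin> {1..<p}" "q \<notin> {p<..<N}" using q_def pN pl by auto
    note r = split_vals[OF perm pin vp' vq' cov sub sep]
    show "\<And>y. y \<in> {p<..<N} \<Longrightarrow> 1 \<le> \<pi> y \<and> \<pi> y \<le> card {p<..<N}" by (rule r(1))
    show "\<And>x. x \<in> {1..<p} \<Longrightarrow> card {p<..<N} < \<pi> x \<and> \<pi> x \<le> N - 2" by (rule r(2))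
  qed
  have ev: "even (card {p<..<N})"
  proof (rule split_even[OF d _ _ _ vp' vq', of p "{p<..<N}"])
    show "N = 2 * (n+1)" using N_def by simp
    show "p \<in> {1..N}" "q \<in> {1..N}" using pN q_def N_def by auto
    show "p = p \<or> p = q" by simp
    show "p \<le> N" using pN by auto
    show "i < p \<or> i \<in> {p<..<N} \<or> i = p \<or> i = q" if "1 \<le> i" "i \<le> N" for i
      using that q_def by auto
    show "\<pi> y \<le> card {p<..<N}" if "y \<in> {p<..<N}" for y using sv(1)[OF that] by simp
    show "card {p<..<N} < \<pi> x" if "1 \<le> x" "x < p" for x using sv(2)[of x] that by simp
    show "p - 1 + card {p<..<N} + 2 = N" using cB pN pl by auto
  qed
  obtain m where m: "N - 1 - p = 2*m" using ev cB by (metis evenE)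
  have "p = 2*(n-m) + 1" using m N_def pN pl by arith
  then obtain k where k: "p = 2*k + 1" by blast
  have km: "k + m = n" using k m N_def pl by auto
  define \<sigma> where "\<sigma> = (\<lambda>j. if 1 \<le> j \<and> j \<le> 2*k then \<pi> (j+0) - 2*m else j)"
  define \<tau> where "\<tau> = (\<lambda>j. if 1 \<le> j \<and> j \<le> 2*m then \<pi> (j+p) - 0 else j)"
  have sD: "\<sigma> \<in> Dm k" unfolding \<sigma>_def
  proof (rule block[OF pi])
    show "2*m < \<pi> i \<and> \<pi> i \<le> 2*m + 2*k" if "0 < i" "i \<le> 0 + 2*k" for i
      using sv(2)[of i] that k cB m N_def by auto
    show "0 + 2*k \<le> 2*(n+1)" using km by auto
    show "even (2*m)" by simp
    show "0 + 2*k = 2*(n+1) \<or> \<pi> (0+2*k) < \<pi> (0+2*k+1)" if "1 \<le> k"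
      using sv(2)[of "2*k"] that k vp' by auto
  qed
  have tD: "\<tau> \<in> Dm m" unfolding \<tau>_def
  proof (rule block[OF pi])
    show "0 < \<pi> i \<and> \<pi> i \<le> 0 + 2*m" if "p < i" "i \<le> p + 2*m" for i
    proof -
      have "i < N" using that m pl by linarith
      thus ?thesis using sv(1)[of i] that cB m by auto
    qed
    show "p + 2*m \<le> 2*(n+1)" using m N_def pl by auto
    show "even (0::nat)" by simp
    show "p + 2*m = 2*(n+1) \<or> \<pi> (p+2*m) < \<pi> (p+2*m+1)" if "1 \<le> m"
    proof -
      have e: "p + 2*m = N - 1" "p + 2*m + 1 = q" using m pl q_def that by auto
      have "\<pi> (N - 1) \<le> card {p<..<N}" using sv(1)[of "N-1"] that m pl by auto
      moreover have "card {p<..<N} < N - 1" using cB pN pl by auto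
      ultimately have "\<pi> (p + 2*m) < \<pi> (p + 2*m + 1)" using e vq' by simp
      thus ?thesis by simp
    qed
  qed
  have eq: "\<pi> = glueB k m \<sigma> \<tau>"
  proof
    fix i
    consider "1 \<le> i" "i \<le> 2*k" | "i = 2*k+1" | "2*k+1 < i" "i < N" | "i = N" | "\<not> (1 \<le> i \<and> i \<le> N)"
      by linarith
    thus "\<pi> i = glueB k m \<sigma> \<tau> i"
    proof cases
      case 1 thus ?thesis using sv(2)[of i] k cB m unfolding glueB_def \<sigma>_def by auto
    next
      case 2 thus ?thesis using vp' k N_def km unfolding glueB_def by auto
    next
      case 3
      have g: "glueB k m \<sigma> \<tau> i = \<tau> (i - (2*k+1))" using 3 N_def km unfolding glueB_def by auto
      have r: "1 \<le> i - (2*k+1) \<and> i - (2*k+1) \<le> 2*m" using 3 N_def km by auto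
      have e: "i - (2*k+1) + p = i" using 3 k by auto
      have "\<tau> (i - (2*k+1)) = \<pi> (i - (2*k+1) + p)" using r unfolding \<tau>_def by simp
      thus ?thesis using g e by simp
    next
      case 4 thus ?thesis using vq' q_def N_def km unfolding glueB_def by auto
    next
      case 5 thus ?thesis using perm_out[OF perm 5] N_def km unfolding glueB_def by auto
    qed
  qed
  show ?thesis using km sD tD eq by blast
qed

definition FA :: "nat \<Rightarrow> nat \<Rightarrow> (nat \<Rightarrow> nat) set" where
  "FA n k = (\<lambda>(\<sigma>, \<tau>). glueA k (n-k) \<sigma> \<tau>) ` (Dm k \<times> Dm (n-k))"

definition FB :: "nat \<Rightarrow> nat \<Rightarrow> (nat \<Rightarrow> nat) set" where
  "FB n k = (\<lambda>(\<sigma>, \<tau>). glueB k (n-k) \<sigma> \<tau>) ` (Dm k \<times> Dm (n-k))"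

lemma Dm_inj: "\<pi> \<in> Dm n \<Longrightarrow> \<pi> x = \<pi> y \<Longrightarrow> x = y"
proof -
  assume a: "\<pi> \<in> Dm n" "\<pi> x = \<pi> y"
  have "dumont1 n \<pi>" using a unfolding Dm_def by auto
  thus "x = y" using perm_inj[OF dum_perm, of n \<pi> x y] a by blast
qed

lemma decomp:
  assumes pi: "\<pi> \<in> Dm (Suc n)"
  shows "(\<exists>k<n. \<pi> \<in> FA n k) \<or> (\<exists>k\<le>n. \<pi> \<in> FB n k)"
proof -
  define N where "N = 2*n+2"
  have d: "dumont1 (n+1) \<pi>" using pi unfolding Dm_def by auto
  have perm: "\<pi> permutes {1..N}" using dum_perm[OF d] N_def by (simp add: algebra_simps)
  have "N \<in> \<pi> ` {1..N}" "N - 1 \<in> \<pi> ` {1..N}" using permutes_image[OF perm] N_def by auto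
  then obtain p q where p: "1 \<le> p" "p \<le> N" "\<pi> p = N" and q: "1 \<le> q" "q \<le> N" "\<pi> q = N - 1"
    by auto
  have "odd (\<pi> q)" using q N_def by simp
  hence "q = N \<or> \<pi> q < \<pi> (q+1)" using dum_odd[OF d, of q] q N_def by auto
  hence "q = N \<or> (q < N \<and> \<pi> q < \<pi> (q+1))" using q by auto
  thus ?thesis
  proof
    assume qN: "q = N"
    obtain k m \<sigma> \<tau> where h: "k + m = n" "\<sigma> \<in> Dm k" "\<tau> \<in> Dm m" "\<pi> = glueB k m \<sigma> \<tau>"
      using decompB[of \<pi> n p] pi p q qN N_def by auto
    have "\<pi> \<in> FB n k" unfolding FB_def using h by (auto intro!: image_eqI[of _ _ "(\<sigma>, \<tau>)"])
    thus ?thesis using h by auto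
  next
    assume "q < N \<and> \<pi> q < \<pi> (q+1)"
    hence lt: "\<pi> q < \<pi> (q+1)" and qN: "q < N" by auto
    have "\<pi> (q+1) \<le> N" using perm_range[OF perm, of "q+1"] qN by auto
    hence "\<pi> (q+1) = N" using lt q by auto
    hence qp: "q + 1 = p" using Dm_inj[OF pi, of "q+1" p] p by auto
    obtain k m \<sigma> \<tau> where h: "k + m = n" "1 \<le> m" "\<sigma> \<in> Dm k" "\<tau> \<in> Dm m" "\<pi> = glueA k m \<sigma> \<tau>"
      using decompA[of \<pi> n p] pi p q qp N_def by auto
    have "\<pi> \<in> FA n k" unfolding FA_def using h by (auto intro!: image_eqI[of _ _ "(\<sigma>, \<tau>)"])
    thus ?thesis using h by auto
  qed
qed

lemma glueA_pos: "glueA k m \<sigma> \<tau> (2*k+2) = 2*k+2*m+2" unfolding glueA_def by auto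
lemma glueB_pos: "glueB k m \<sigma> \<tau> (2*k+1) = 2*k+2*m+2" unfolding glueB_def by auto

lemma FA_sub: "k < n \<Longrightarrow> FA n k \<subseteq> Dm (Suc n)"
  unfolding FA_def using glueA_in[of _ k _ "n-k"] by auto

lemma FB_sub: "k \<le> n \<Longrightarrow> FB n k \<subseteq> Dm (Suc n)"
  unfolding FB_def using glueB_in[of _ k _ "n-k"] by auto

lemma FA_pos: "k < n \<Longrightarrow> g \<in> FA n k \<Longrightarrow> g (2*k+2) = 2*n+2"
  unfolding FA_def using glueA_pos by auto

lemma FB_pos: "k \<le> n \<Longrightarrow> g \<in> FB n k \<Longrightarrow> g (2*k+1) = 2*n+2"
  unfolding FB_def using glueB_pos by auto

lemma glueA_inj:
  assumes "\<sigma> \<in> Dm k" "\<sigma>' \<in> Dm k" "\<tau> \<in> Dm m" "\<tau>' \<in> Dm m"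
    and eq: "glueA k m \<sigma> \<tau> = glueA k m \<sigma>' \<tau>'"
  shows "\<sigma> = \<sigma>' \<and> \<tau> = \<tau>'"
proof
  have p: "\<sigma> permutes {1..2*k}" "\<sigma>' permutes {1..2*k}" "\<tau> permutes {1..2*m}" "\<tau>' permutes {1..2*m}"
    using assms(1-4) unfolding Dm_def using dum_perm by auto
  show "\<sigma> = \<sigma>'"
  proof
    fix i
    show "\<sigma> i = \<sigma>' i"
    proof (cases "1 \<le> i \<and> i \<le> 2*k")
      case True
      thus ?thesis using fun_cong[OF eq, of i] unfolding glueA_def by auto
    next
      case False
      thus ?thesis using perm_out[OF p(1) False] perm_out[OF p(2) False] by simp
    qed
  qed
  show "\<tau> = \<tau>'"
  proof
    fix i
    show "\<tau> i = \<tau>' i"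
    proof (cases "1 \<le> i \<and> i \<le> 2*m")
      case True
      thus ?thesis using fun_cong[OF eq, of "i + (2*k+2)"] unfolding glueA_def by auto
    next
      case False
      thus ?thesis using perm_out[OF p(3) False] perm_out[OF p(4) False] by simp
    qed
  qed
qed

lemma glueB_inj:
  assumes "\<sigma> \<in> Dm k" "\<sigma>' \<in> Dm k" "\<tau> \<in> Dm m" "\<tau>' \<in> Dm m"
    and eq: "glueB k m \<sigma> \<tau> = glueB k m \<sigma>' \<tau>'"
  shows "\<sigma> = \<sigma>' \<and> \<tau> = \<tau>'"
proof
  have p: "\<sigma> permutes {1..2*k}" "\<sigma>' permutes {1..2*k}" "\<tau> permutes {1..2*m}" "\<tau>' permutes {1..2*m}"
    using assms(1-4) unfolding Dm_def using dum_perm by auto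
  show "\<sigma> = \<sigma>'"
  proof
    fix i
    show "\<sigma> i = \<sigma>' i"
    proof (cases "1 \<le> i \<and> i \<le> 2*k")
      case True
      thus ?thesis using fun_cong[OF eq, of i] unfolding glueB_def by auto
    next
      case False
      thus ?thesis using perm_out[OF p(1) False] perm_out[OF p(2) False] by simp
    qed
  qed
  show "\<tau> = \<tau>'"
  proof
    fix i
    show "\<tau> i = \<tau>' i"
    proof (cases "1 \<le> i \<and> i \<le> 2*m")
      case True
      thus ?thesis using fun_cong[OF eq, of "i + (2*k+1)"] unfolding glueB_def by auto
    next
      case False
      thus ?thesis using perm_out[OF p(3) False] perm_out[OF p(4) False] by simp
    qed
  qed
qed

lemma card_FA: "card (FA n k) = card (Dm k) * card (Dm (n-k))"
proof -
  have "inj_on (\<lambda>(\<sigma>, \<tau>). glueA k (n-k) \<sigma> \<tau>) (Dm k \<times> Dm (n-k))"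
    by (rule inj_onI) (auto dest: glueA_inj)
  thus ?thesis unfolding FA_def by (simp add: card_image card_cartesian_product)
qed

lemma card_FB: "card (FB n k) = card (Dm k) * card (Dm (n-k))"
proof -
  have "inj_on (\<lambda>(\<sigma>, \<tau>). glueB k (n-k) \<sigma> \<tau>) (Dm k \<times> Dm (n-k))"
    by (rule inj_onI) (auto dest: glueB_inj)
  thus ?thesis unfolding FB_def by (simp add: card_image card_cartesian_product)
qed

lemma card_Dm_Suc:
  "card (Dm (Suc n)) = (\<Sum>k<n. card (Dm k) * card (Dm (n-k))) + (\<Sum>k\<le>n. card (Dm k) * card (Dm (n-k)))"
proof -
  have eq: "Dm (Suc n) = (\<Union>k\<in>{..<n}. FA n k) \<union> (\<Union>k\<in>{..n}. FB n k)"
  proof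
    show "Dm (Suc n) \<subseteq> (\<Union>k\<in>{..<n}. FA n k) \<union> (\<Union>k\<in>{..n}. FB n k)"
    proof
      fix \<pi> assume "\<pi> \<in> Dm (Suc n)"
      from decomp[OF this] show "\<pi> \<in> (\<Union>k\<in>{..<n}. FA n k) \<union> (\<Union>k\<in>{..n}. FB n k)"
        by auto
    qed
    show "(\<Union>k\<in>{..<n}. FA n k) \<union> (\<Union>k\<in>{..n}. FB n k) \<subseteq> Dm (Suc n)"
      using FA_sub FB_sub by blast
  qed
  have finA: "finite (FA n k)" for k
    using Dm_finite unfolding FA_def by auto
  have finB: "finite (FB n k)" for k
    using Dm_finite unfolding FB_def by auto
  have dAA: "FA n i \<inter> FA n j = {}" if "i \<in> {..<n}" "j \<in> {..<n}" "i \<noteq> j" for i j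
  proof (rule ccontr)
    assume "FA n i \<inter> FA n j \<noteq> {}"
    then obtain g where g: "g \<in> FA n i" "g \<in> FA n j" by auto
    have "g (2*i+2) = g (2*j+2)" using FA_pos[of i n g] FA_pos[of j n g] g that by auto
    moreover have "g \<in> Dm (Suc n)" using g FA_sub that by auto
    ultimately have "2*i+2 = 2*j+2" using Dm_inj by blast
    thus False using that by simp
  qed
  have dBB: "FB n i \<inter> FB n j = {}" if "i \<in> {..n}" "j \<in> {..n}" "i \<noteq> j" for i j
  proof (rule ccontr)
    assume "FB n i \<inter> FB n j \<noteq> {}"
    then obtain g where g: "g \<in> FB n i" "g \<in> FB n j" by auto
    have "g (2*i+1) = g (2*j+1)" using FB_pos[of i n g] FB_pos[of j n g] g that by auto
    moreover have "g \<in> Dm (Suc n)" using g FB_sub that by auto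
    ultimately have "2*i+1 = 2*j+1" using Dm_inj by blast
    thus False using that by simp
  qed
  have dAB: "(\<Union>k\<in>{..<n}. FA n k) \<inter> (\<Union>k\<in>{..n}. FB n k) = {}"
  proof (rule ccontr)
    assume "(\<Union>k\<in>{..<n}. FA n k) \<inter> (\<Union>k\<in>{..n}. FB n k) \<noteq> {}"
    then obtain g i j where g: "i < n" "j \<le> n" "g \<in> FA n i" "g \<in> FB n j" by auto
    have "g (2*i+2) = g (2*j+1)" using FA_pos[of i n g] FB_pos[of j n g] g by auto
    moreover have "g \<in> Dm (Suc n)" using g FA_sub by auto
    ultimately have "2*i+2 = 2*j+1" using Dm_inj by blast
    thus False by presburger
  qed
  have "card (Dm (Suc n)) = card (\<Union>k\<in>{..<n}. FA n k) + card (\<Union>k\<in>{..n}. FB n k)"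
    unfolding eq by (rule card_Un_disjoint) (auto simp: finA finB dAB)
  also have "card (\<Union>k\<in>{..<n}. FA n k) = (\<Sum>k<n. card (FA n k))"
    by (rule card_UN_disjoint) (auto simp: finA dAA)
  also have "card (\<Union>k\<in>{..n}. FB n k) = (\<Sum>k\<le>n. card (FB n k))"
    by (rule card_UN_disjoint) (auto simp: finB dBB)
  finally show ?thesis by (simp add: card_FA card_FB)
qed

lemma main: "real (card (Dm n)) = little_schroeder (n + 1)"
proof (induction n rule: less_induct)
  case (less n)
  show ?case
  proof (cases n)
    case 0
    thus ?thesis using Dm0 ls1 by simp
  next
    case (Suc j)
    have IH: "real (card (Dm i)) = little_schroeder (i + 1)" if "i \<le> j" for i
      using less Suc that by auto
    define c where "c i = real (card (Dm i))" for i
    have c0: "c 0 = 1" using Dm0 c_def by simp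
    have "c (Suc j) = (\<Sum>k<j. c k * c (j-k)) + (\<Sum>k\<le>j. c k * c (j-k))"
      unfolding c_def card_Dm_Suc by simp
    also have "(\<Sum>k\<le>j. c k * c (j-k)) = (\<Sum>k<j. c k * c (j-k)) + c j"
      using c0 by (simp add: lessThan_Suc_atMost[symmetric])
    finally have "c (Suc j) = 2 * (\<Sum>k\<le>j. c k * c (j-k)) - c j"
      using c0 by (simp add: lessThan_Suc_atMost[symmetric])
    also have "(\<Sum>k\<le>j. c k * c (j-k)) = (\<Sum>k\<le>j. little_schroeder (k + 1) * little_schroeder (j - k + 1))"
      by (rule sum.cong) (auto simp: c_def IH)
    also have "c j = little_schroeder (j + 1)" using IH c_def by simp
    finally have "c (Suc j) = little_schroeder (j + 2)" using ls_rec[of j] by simp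
    thus ?thesis using Suc c_def by simp
  qed
qed

theorem theorem3p4:
  fixes n :: nat
  shows "real (card (dumont1_avoiding n {[1,3,4,2], [1,4,2,3]})) = little_schroeder (n + 1)"
  using main Dm_eq by simp


end
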